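(* Let $\gamma_{ab}$ and $h_{ab}$ be real symmetric invertible $2\times2$ matrices (the induced metric and the worldsheet metric at a point), with matrix forms $\Gamma$ and $H$, and let $a_1=\operatorname{tr}(\Gamma H^{-1})=\gamma_{ab}h^{ba}$, $a_2=\operatorname{tr}((\Gamma H^{-1})^2)=\gamma_{ab}h^{bc}\gamma_{cd}h^{da}$, where $h^{ab}$ is the inverse of $h_{ab}$. Let $\mathcal{L}=f(\sqrt{\gamma},a_1,a_2)$ with $f$ continuously differentiable, regarded as a function of $h^{ij}$ (with $\gamma_{ab}$ fixed). If $\partial\mathcal{L}/\partial h^{ij}=0$ for all $i,j$ and $\partial f/\partial a_1\neq0$ there, then $\partial f/\partial a_2\neq0$ and $$h_{ab}=\phi\,\gamma_{ab},\qquad \phi=-2\,\frac{\partial f/\partial a_2}{\partial f/\partial a_1}\Bigg|_{a_1=2\phi^{-1},\ a_2=2\phi^{-2}},$$ and in particular $a_1=2\phi^{-1}$, $a_2=2\phi^{-2}$.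
   Context: $\gamma$ denotes the absolute value of $\det\gamma_{ab}$; $\sqrt\gamma$ does not depend on $h$. The derivative $\partial\mathcal{L}/\partial h^{ij}$ is computed by the chain rule using $\partial a_1/\partial h^{ij}=\gamma_{ji}$ and $\partial a_2/\partial h^{ij}=2\gamma_{ja}h^{ab}\gamma_{bi}$. *)

theory Defs
  imports "HOL-Analysis.Analysis"
begin

text \<open>Matrices are 2x2 real matrices \<open>real^2^2\<close>. \<open>K\<close> stands for the inverse
  worldsheet metric (entries h^{ab}), \<open>\<Gamma>\<close> for the induced metric.\<close>

definition inv_a1 :: "real^2^2 \<Rightarrow> real^2^2 \<Rightarrow> real" where
  "inv_a1 \<Gamma> K = trace (\<Gamma> ** K)"

definition inv_a2 :: "real^2^2 \<Rightarrow> real^2^2 \<Rightarrow> real" where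
  "inv_a2 \<Gamma> K = trace ((\<Gamma> ** K) ** (\<Gamma> ** K))"

definition lagr :: "(real \<times> real \<times> real \<Rightarrow> real) \<Rightarrow> real^2^2 \<Rightarrow> real^2^2 \<Rightarrow> real" where
  "lagr f \<Gamma> K = f (sqrt \<bar>det \<Gamma>\<bar>, inv_a1 \<Gamma> K, inv_a2 \<Gamma> K)"

definition elem_mat :: "2 \<Rightarrow> 2 \<Rightarrow> real^2^2" where
  "elem_mat i j = (\<chi> a b. if a = i \<and> b = j then 1 else 0)"

end

theory Submission
  imports Defs
begin

lemma trace_scaleR: "trace (t *\<^sub>R (A::real^'n^'n)) = t * trace A"
  by (simp add: trace_def sum_distrib_left)

lemma trace_elem: "trace ((M::real^2^2) ** elem_mat i j) = M$j$i"
  using exhaust_2[of i] exhaust_2[of j] by (auto simp add: trace_def matrix_matrix_mult_def elem_mat_def sum_2)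

lemma matrix_scalar_ac': "(A::real^'n^'m) ** (k *\<^sub>R B) = k *\<^sub>R (A ** B)"
  by (metis matrix_scalar_ac scalar_matrix_assoc)
lemma scalar_matrix_assoc': "(k *\<^sub>R (A::real^'n^'m)) ** B = k *\<^sub>R (A ** B)"
  by (metis scalar_matrix_assoc)

lemma matrix_add_rdistrib': "((B + C) ** (A::real^'n^'m)) = (B ** A) + (C ** A)"
  by (vector matrix_matrix_mult_def sum.distrib[symmetric] field_simps)

lemma a1_exp: "inv_a1 G (K + t *\<^sub>R E) = inv_a1 G K + t * trace (G ** E)"
  by (simp add: inv_a1_def matrix_add_ldistrib matrix_scalar_ac'  trace_add trace_scaleR)

lemma a2_exp: "inv_a2 G (K + t *\<^sub>R E) = inv_a2 G K + t * (2 * trace ((G ** K ** G) ** E)) + t^2 * trace ((G**E)**(G**E))"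
proof -
  define P where "P = G ** K"
  define Q where "Q = G ** E"
  have 1: "G ** (K + t *\<^sub>R E) = P + t *\<^sub>R Q"
    unfolding P_def Q_def by (simp only: matrix_add_ldistrib matrix_scalar_ac')
  have 2: "(P + t *\<^sub>R Q) ** (P + t *\<^sub>R Q) = P ** P + (t *\<^sub>R (P ** Q) + t *\<^sub>R (Q ** P)) + (t*t) *\<^sub>R (Q ** Q)"
    by (simp add: matrix_add_ldistrib matrix_add_rdistrib' matrix_scalar_ac' scalar_matrix_assoc' scaleR_add_right add_ac)
  have 3: "trace (Q ** P) = trace ((G ** K ** G) ** E)"
    unfolding P_def Q_def by (metis matrix_mul_assoc trace_mul_sym)
  have 4: "trace (P ** Q) = trace ((G ** K ** G) ** E)"
    unfolding P_def Q_def by (metis matrix_mul_assoc)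
  show ?thesis
    unfolding inv_a2_def 1 2 trace_add trace_scaleR 3 4
    by (simp add: P_def Q_def power2_eq_square)
qed

lemma inv_props: assumes "invertible (A::real^'n^'n)"
  shows "A ** matrix_inv A = mat 1" "matrix_inv A ** A = mat 1"
  using someI_ex[OF assms[unfolded invertible_def]] unfolding matrix_inv_def by auto
theorem mainTheorem6:
  fixes \<Gamma> H :: "real^2^2"
    and f :: "real \<times> real \<times> real \<Rightarrow> real"
    and f' :: "real \<times> real \<times> real \<Rightarrow> real \<times> real \<times> real \<Rightarrow> real"
  assumes symG: "transpose \<Gamma> = \<Gamma>" and invG: "invertible \<Gamma>"
    and symH: "transpose H = H" and invH: "invertible H"
    and fderiv: "\<And>p. (f has_derivative f' p) (at p)"
    and fC1: "\<And>v. continuous_on UNIV (\<lambda>p. f' p v)"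
    and stat: "\<And>i j. ((\<lambda>t. lagr f \<Gamma> (matrix_inv H + t *\<^sub>R elem_mat i j))
                        has_real_derivative 0) (at 0)"
    and fa1: "f' (sqrt \<bar>det \<Gamma>\<bar>, inv_a1 \<Gamma> (matrix_inv H), inv_a2 \<Gamma> (matrix_inv H)) (0, 1, 0) \<noteq> 0"
  shows "f' (sqrt \<bar>det \<Gamma>\<bar>, inv_a1 \<Gamma> (matrix_inv H), inv_a2 \<Gamma> (matrix_inv H)) (0, 0, 1) \<noteq> 0
     \<and> (\<exists>\<phi>. \<phi> \<noteq> 0
          \<and> \<phi> = - 2 * f' (sqrt \<bar>det \<Gamma>\<bar>, 2 / \<phi>, 2 / \<phi>^2) (0, 0, 1)
                    / f' (sqrt \<bar>det \<Gamma>\<bar>, 2 / \<phi>, 2 / \<phi>^2) (0, 1, 0)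
          \<and> H = \<phi> *\<^sub>R \<Gamma>
          \<and> inv_a1 \<Gamma> (matrix_inv H) = 2 / \<phi>
          \<and> inv_a2 \<Gamma> (matrix_inv H) = 2 / \<phi>^2)"
proof -
  define K where "K = matrix_inv H"
  define s where "s = sqrt \<bar>det \<Gamma>\<bar>"
  define p where "p = (s, inv_a1 \<Gamma> K, inv_a2 \<Gamma> K)"
  define f1 where "f1 = f' p (0, 1, 0)"
  define f2 where "f2 = f' p (0, 0, 1)"
  have lin: "linear (f' p)" using fderiv[of p] has_derivative_linear by blast
  have dz: "f1 * \<Gamma>$j$i + 2 * f2 * (\<Gamma> ** K ** \<Gamma>)$j$i = 0" for i j
  proof -
    define E where "E = elem_mat i j"
    define b1 where "b1 = trace (\<Gamma> ** E)"
    define c where "c = trace ((\<Gamma> ** K ** \<Gamma>) ** E)"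
    define d where "d = trace ((\<Gamma> ** E) ** (\<Gamma> ** E))"
    define g where "g = (\<lambda>t::real. (s, inv_a1 \<Gamma> K + t * b1, inv_a2 \<Gamma> K + t * (2 * c) + t^2 * d))"
    define v where "v = ((0::real), b1, 2 * c)"
    have eq: "(\<lambda>t. lagr f \<Gamma> (matrix_inv H + t *\<^sub>R elem_mat i j)) = f \<circ> g"
      by (simp add: fun_eq_iff lagr_def a1_exp a2_exp g_def K_def s_def E_def b1_def c_def d_def)
    have gd: "(g has_derivative (\<lambda>t. t *\<^sub>R v)) (at 0)"
    proof -
      have d1: "((\<lambda>t::real. inv_a1 \<Gamma> K + t * b1) has_derivative (\<lambda>t. t * b1)) (at 0)"
        by (rule has_derivative_eq_rhs, (rule derivative_eq_intros)+, auto simp: fun_eq_iff intro!: bounded_linear_imp_has_derivative bounded_linear_mult_left)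
      have d2r: "((\<lambda>t::real. inv_a2 \<Gamma> K + t * (2 * c) + t^2 * d) has_real_derivative (2 * c)) (at 0)"
        by (auto intro!: derivative_eq_intros)
      have d2: "((\<lambda>t::real. inv_a2 \<Gamma> K + t * (2 * c) + t^2 * d) has_derivative (\<lambda>t. t * (2 * c))) (at 0)"
        proof -
        have "(\<lambda>t::real. t * (2 * c)) = (*) (2 * c)" by (simp add: fun_eq_iff mult.commute)
        then show ?thesis using d2r unfolding has_field_derivative_def by simp
      qed
      have "((\<lambda>t::real. (s, inv_a1 \<Gamma> K + t * b1, inv_a2 \<Gamma> K + t * (2 * c) + t^2 * d)) has_derivative
              (\<lambda>t. (0, t * b1, t * (2 * c)))) (at 0)"
        by (intro has_derivative_Pair d1 d2 has_derivative_const)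
      then show ?thesis unfolding g_def v_def by simp
    qed
    have g0: "g 0 = p" by (simp add: g_def p_def)
    have ch: "((f \<circ> g) has_derivative (f' p \<circ> (\<lambda>t. t *\<^sub>R v))) (at 0)"
      using diff_chain_at[OF gd] fderiv[of "g 0"] g0 by simp
    have st: "((f \<circ> g) has_derivative (\<lambda>t. t * 0)) (at 0)"
    proof -
      have "(*) (0::real) = (\<lambda>t. t * 0)" by (simp add: fun_eq_iff)
      then show ?thesis using stat[of i j] unfolding eq has_field_derivative_def by metis
    qed
    have "(f' p \<circ> (\<lambda>t. t *\<^sub>R v)) = (\<lambda>t. t * 0)"
      using has_derivative_unique[OF ch st] .
    then have "f' p v = 0" by (metis comp_apply mult_zero_right scaleR_one)
    moreover have "v = b1 *\<^sub>R (0, 1, 0) + (2 * c) *\<^sub>R (0, 0, 1)" by (simp add: v_def)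
    ultimately have "f' p (b1 *\<^sub>R (0, 1, 0) + (2 * c) *\<^sub>R (0, 0, 1)) = 0" by simp
    then have "f' p (b1 *\<^sub>R (0, 1, 0)) + f' p ((2 * c) *\<^sub>R (0, 0, 1)) = 0"
      by (simp only: linear_add[OF lin])
    then have "b1 * f1 + 2 * c * f2 = 0"
      by (simp only: linear_cmul[OF lin] f1_def f2_def real_scaleR_def)
    moreover have "b1 = \<Gamma>$j$i" unfolding b1_def E_def by (rule trace_elem)
    moreover have "c = (\<Gamma> ** K ** \<Gamma>)$j$i" unfolding c_def E_def by (rule trace_elem)
    ultimately show ?thesis by (simp add: algebra_simps)
  qed
  have meq: "f1 *\<^sub>R \<Gamma> + (2 * f2) *\<^sub>R (\<Gamma> ** K ** \<Gamma>) = 0"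
    using dz by (simp add: vec_eq_iff)
  have f1nz: "f1 \<noteq> 0" using fa1 by (simp add: f1_def p_def s_def K_def)
  have ninv0: "\<not> invertible (0::real^2^2)"
  proof
    assume "invertible (0::real^2^2)"
    then have "(mat 1::real^2^2) = 0" by (auto simp: invertible_def)
    then have "(mat 1::real^2^2)$1$1 = 0" by simp
    then show False by (simp add: mat_def)
  qed
  have f2nz: "f2 \<noteq> 0"
  proof
    assume "f2 = 0"
    then have "f1 *\<^sub>R \<Gamma> = 0" using meq by simp
    then have "\<Gamma> = 0" using f1nz by simp
    then show False using invG ninv0 by simp
  qed
  define c where "c = - f1 / (2 * f2)"
  have cnz: "c \<noteq> 0" using f1nz f2nz by (simp add: c_def)
  have GKG: "\<Gamma> ** K ** \<Gamma> = c *\<^sub>R \<Gamma>"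
  proof -
    have "(2 * f2) *\<^sub>R (\<Gamma> ** K ** \<Gamma>) = - (f1 *\<^sub>R \<Gamma>)" using meq by (simp add: eq_neg_iff_add_eq_0 add.commute)
    then have "(1 / (2 * f2)) *\<^sub>R ((2 * f2) *\<^sub>R (\<Gamma> ** K ** \<Gamma>)) = (1 / (2 * f2)) *\<^sub>R (- (f1 *\<^sub>R \<Gamma>))" by simp
    then show ?thesis using f2nz by (simp add: c_def)
  qed
  define Gi where "Gi = matrix_inv \<Gamma>"
  have GGi: "\<Gamma> ** Gi = mat 1" "Gi ** \<Gamma> = mat 1" using inv_props[OF invG] by (auto simp: Gi_def)
  have HK: "H ** K = mat 1" using inv_props[OF invH] by (simp add: K_def)
  have Keq: "K = c *\<^sub>R Gi"
  proof -
    have "K = (Gi ** \<Gamma>) ** K ** (\<Gamma> ** Gi)" using GGi by simp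
    also have "\<dots> = Gi ** (\<Gamma> ** K ** \<Gamma>) ** Gi" by (simp add: matrix_mul_assoc)
    also have "\<dots> = c *\<^sub>R ((Gi ** \<Gamma>) ** Gi)" by (simp add: GKG matrix_scalar_ac' scalar_matrix_assoc' matrix_mul_assoc)
    finally show ?thesis using GGi by simp
  qed
  have Heq: "H = (1 / c) *\<^sub>R \<Gamma>"
  proof -
    have "c *\<^sub>R (H ** Gi) = mat 1" using HK Keq by (simp add: matrix_scalar_ac')
    then have "c *\<^sub>R (H ** Gi) ** \<Gamma> = \<Gamma>" by simp
    then have "c *\<^sub>R H = \<Gamma>" using GGi by (simp add: scalar_matrix_assoc' matrix_mul_assoc[symmetric])
    then show ?thesis using cnz by (metis scaleR_scaleR nonzero_divide_eq_eq divide_self_if scaleR_one mult.commute times_divide_eq_left mult_1)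
  qed
  have GK: "\<Gamma> ** K = c *\<^sub>R mat 1" using Keq GGi by (simp add: matrix_scalar_ac')
  have tI: "trace (mat 1 :: real^2^2) = 2" by (simp add: trace_I)
  have A1: "inv_a1 \<Gamma> K = 2 * c" by (simp add: inv_a1_def GK trace_scaleR tI)
  have A2: "inv_a2 \<Gamma> K = 2 * c^2"
    by (simp add: inv_a2_def GK trace_scaleR tI matrix_scalar_ac' scalar_matrix_assoc' power2_eq_square)
  define \<phi> where "\<phi> = 1 / c"
  have phinz: "\<phi> \<noteq> 0" using cnz by (simp add: \<phi>_def)
  have a1p: "2 / \<phi> = inv_a1 \<Gamma> K" using A1 by (simp add: \<phi>_def)
  have a2p: "2 / \<phi>^2 = inv_a2 \<Gamma> K" using A2 by (simp add: \<phi>_def power2_eq_square)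
  have pp: "(s, 2 / \<phi>, 2 / \<phi>^2) = p" by (simp only: a1p a2p p_def)
  have phieq: "\<phi> = - 2 * f2 / f1" using f1nz f2nz by (simp add: \<phi>_def c_def)
  have G1: "f' (s, inv_a1 \<Gamma> K, inv_a2 \<Gamma> K) (0, 0, 1) \<noteq> 0" using f2nz by (simp add: f2_def p_def)
  have G2: "\<phi> = - 2 * f' (s, 2 / \<phi>, 2 / \<phi>^2) (0, 0, 1) / f' (s, 2 / \<phi>, 2 / \<phi>^2) (0, 1, 0)"
    unfolding pp using phieq by (simp only: f1_def f2_def)
  have G3: "H = \<phi> *\<^sub>R \<Gamma>" using Heq by (simp add: \<phi>_def)
  show ?thesis
    unfolding K_def[symmetric] s_def[symmetric]
    using G1 G2 G3 phinz a1p a2p by metis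
qed

end
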